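(* Let $p,k,q,n$ be positive integers. If there exist a partition of $\{1,\dots,q\}$ into $n$ weakly sum-free subsets and a partition of $\{1,\dots,p\}$ into $k$ sum-free subsets, then there exists a partition of $\{1,\dots, p(q+\lceil q/2\rceil+1)+q\}$ into $n+k$ weakly sum-free subsets.
   Context: A set $A \subseteq \mathbb{N}$ is sum-free if for all $(a,b)\in A^2$ (allowing $a=b$), $a+b \notin A$. A set $B\subseteq\mathbb{N}$ is weakly sum-free if for all $(a,b)\in B^2$ with $a\neq b$, $a+b\notin B$. *)

theory Defs
  imports Complex_Main
begin

definition sum_free :: "nat set \<Rightarrow> bool" where
  "sum_free A \<longleftrightarrow> (\<forall>a\<in>A. \<forall>b\<in>A. a + b \<notin> A)"

definition weakly_sum_free :: "nat set \<Rightarrow> bool" where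
  "weakly_sum_free B \<longleftrightarrow> (\<forall>a\<in>B. \<forall>b\<in>B. a \<noteq> b \<longrightarrow> a + b \<notin> B)"

text \<open>A partition of S into n parts (indexed 0..n-1), each satisfying P.
  Parts are pairwise disjoint and cover S; parts may be empty (colouring convention).\<close>
definition partition_into :: "(nat set \<Rightarrow> bool) \<Rightarrow> nat set \<Rightarrow> nat \<Rightarrow> bool" where
  "partition_into P S n \<longleftrightarrow> (\<exists>F :: nat \<Rightarrow> nat set.
      (\<Union>i<n. F i) = S \<and>
      (\<forall>i<n. \<forall>j<n. i \<noteq> j \<longrightarrow> F i \<inter> F j = {}) \<and>
      (\<forall>i<n. P (F i)))"

end

theory Submission
  imports Defs
begin

lemma dm_div: "t < (m::nat) \<Longrightarrow> (b*m + t) div m = b"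
  by simp

lemma dm_mod: "t < (m::nat) \<Longrightarrow> (b*m + t) mod m = t"
  by simp

lemma nat_mult_cancel_aux:
  fixes a b m s t :: nat
  assumes "a*m + s = b*m + t" "s < m + t" "t < m + s"
  shows "a = b"
proof (rule ccontr)
  assume "a \<noteq> b"
  then consider "a + 1 \<le> b" | "b + 1 \<le> a" by linarith
  then show False
  proof cases
    case 1
    then have "(a+1)*m \<le> b*m" by (rule mult_right_mono) simp
    then show False using assms by (simp add: algebra_simps)
  next
    case 2
    then have "(b+1)*m \<le> a*m" by (rule mult_right_mono) simp
    then show False using assms by (simp add: algebra_simps)
  qed
qed

lemma wsf_subset: "weakly_sum_free A \<Longrightarrow> B \<subseteq> A \<Longrightarrow> weakly_sum_free B"
  unfolding weakly_sum_free_def by blast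

lemma sf_subset: "weakly_sum_free A \<Longrightarrow> B \<subseteq> A \<Longrightarrow> weakly_sum_free B"
  unfolding weakly_sum_free_def by blast

lemma D_wsf:
  fixes m q c h :: nat
  assumes B: "weakly_sum_free B" "B \<subseteq> {1..q}" and m: "m = q + c + 1"
    and h1: "q < 2*h + 2" and h2: "q \<le> c + h + 1"
  shows "weakly_sum_free {x. x mod m \<in> B \<and> (x div m = 0 \<or> h < x mod m)}"
  unfolding weakly_sum_free_def
proof (intro ballI impI)
  fix x y
  assume x: "x \<in> {x. x mod m \<in> B \<and> (x div m = 0 \<or> h < x mod m)}"
    and y: "y \<in> {x. x mod m \<in> B \<and> (x div m = 0 \<or> h < x mod m)}"
    and xy: "x \<noteq> y"
  show "x + y \<notin> {x. x mod m \<in> B \<and> (x div m = 0 \<or> h < x mod m)}"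
  proof
    assume z: "x + y \<in> {x. x mod m \<in> B \<and> (x div m = 0 \<or> h < x mod m)}"
    define a where "a = x div m"
    define r where "r = x mod m"
    define a' where "a' = y div m"
    define r' where "r' = y mod m"
    have mpos: "m > 0" using m by simp
    have xe: "x = a*m + r" unfolding a_def r_def by simp
    have ye: "y = a'*m + r'" unfolding a'_def r'_def by simp
    have rB: "r \<in> B" "r' \<in> B" using x y r_def r'_def by auto
    have rq: "1 \<le> r" "r \<le> q" "1 \<le> r'" "r' \<le> q" using rB B(2) by auto
    show False
    proof (cases "r + r' < m")
      case True
      have zs: "x + y = (a+a')*m + (r+r')" using xe ye by (simp add: algebra_simps)
      have zm: "(x+y) mod m = r + r'" using zs True by simp
      have zd: "(x+y) div m = a + a'" using zs True by simp
      have rr: "r + r' \<in> B" using z zm by simp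
      show False
      proof (cases "r = r'")
        case True
        then have "a \<noteq> a'" using xy xe ye by auto
        then have "h < r" using x y r_def r'_def a_def a'_def True by auto
        then show False using rr B(2) True h1 by auto
      next
        case False
        then show False using B(1) rB rr unfolding weakly_sum_free_def by blast
      qed
    next
      case False
      have zs: "x + y = (a+a'+1)*m + (r+r'-m)" using xe ye False by (simp add: algebra_simps)
      have lt: "r+r'-m < m" using rq m by simp
      have zm: "(x+y) mod m = r + r' - m" unfolding zs by (rule dm_mod[OF lt])
      have zd: "(x+y) div m = a + a' + 1" unfolding zs by (rule dm_div[OF lt])
      have "h < r + r' - m" using z zm zd by auto
      then show False using rq m h2 by auto
    qed
  qed
qed

lemma C_wsf:
  fixes m q c :: nat
  assumes A: "sum_free A" and m: "m = q + c + 1" and qc: "q \<le> 2*c"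
  shows "weakly_sum_free {x. (x+c) mod m \<le> q \<and> (x+c) div m \<in> A}"
  unfolding weakly_sum_free_def
proof (intro ballI impI)
  fix x y
  assume x: "x \<in> {x. (x+c) mod m \<le> q \<and> (x+c) div m \<in> A}"
    and y: "y \<in> {x. (x+c) mod m \<le> q \<and> (x+c) div m \<in> A}"
  show "x + y \<notin> {x. (x+c) mod m \<le> q \<and> (x+c) div m \<in> A}"
  proof
    assume z: "x + y \<in> {x. (x+c) mod m \<le> q \<and> (x+c) div m \<in> A}"
    define a where "a = (x+c) div m"
    define u where "u = (x+c) mod m"
    define a' where "a' = (y+c) div m"
    define u' where "u' = (y+c) mod m"
    define a'' where "a'' = (x+y+c) div m"
    define u'' where "u'' = (x+y+c) mod m"
    have e1: "x + c = a*m + u" unfolding a_def u_def by simp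
    have e2: "y + c = a'*m + u'" unfolding a'_def u'_def by simp
    have e3: "x + y + c = a''*m + u''" unfolding a''_def u''_def by simp
    have b: "u \<le> q" "u' \<le> q" "u'' \<le> q" using x y z u_def u'_def u''_def by auto
    have "a''*m + (u'' + c) = (a+a')*m + (u+u')" using e1 e2 e3 by (simp add: algebra_simps)
    then have "a'' = a + a'" by (rule nat_mult_cancel_aux) (use b m qc in auto)
    moreover have "a \<in> A" "a' \<in> A" "a'' \<in> A" using x y z a_def a'_def a''_def by auto
    ultimately show False using A unfolding sum_free_def by auto
  qed
qed

theorem theorem3p1:
  fixes p k q n :: nat
  assumes "p > 0" and "k > 0" and "q > 0" and "n > 0"
    and "partition_into weakly_sum_free {1..q} n"
    and "partition_into sum_free {1..p} k"
  shows "partition_into weakly_sum_free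
           {1 .. p * (q + nat \<lceil>real q / 2\<rceil> + 1) + q} (n + k)"
proof -
  obtain FB where FB: "(\<Union>i<n. FB i) = {1..q}" "\<forall>i<n. \<forall>j<n. i \<noteq> j \<longrightarrow> FB i \<inter> FB j = {}"
      "\<forall>i<n. weakly_sum_free (FB i)"
    using assms(5) unfolding partition_into_def by blast
  obtain FA where FA: "(\<Union>i<k. FA i) = {1..p}" "\<forall>i<k. \<forall>j<k. i \<noteq> j \<longrightarrow> FA i \<inter> FA j = {}"
      "\<forall>i<k. sum_free (FA i)"
    using assms(6) unfolding partition_into_def by blast
  define c where "c = (q+1) div 2"
  define h where "h = q div 2"
  define m where "m = q + c + 1"
  define N where "N = p*m + q"
  have ceq: "nat \<lceil>real q / 2\<rceil> = c"
  proof -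
    have "\<lceil>real q / 2\<rceil> = int c"
      unfolding c_def by (rule ceiling_unique; simp; linarith)
    then show ?thesis by simp
  qed
  have mpos: "m > 0" using m_def by simp
  have hc: "c + h = q" "q \<le> 2*c" "q < 2*h + 2" unfolding c_def h_def by auto
  define Dr where "Dr x \<longleftrightarrow> (x mod m \<in> {1..q} \<and> (x div m = 0 \<or> h < x mod m))" for x
  define G where "G i = (if i < n then {1..N} \<inter> {x. x mod m \<in> FB i \<and> (x div m = 0 \<or> h < x mod m)}
     else {1..N} \<inter> {x. \<not> Dr x} \<inter> {x. (x+c) mod m \<le> q \<and> (x+c) div m \<in> FA (i-n)})" for i
  have FBsub: "FB i \<subseteq> {1..q}" if "i < n" for i using FB(1) that by blast
  have FAsub: "FA i \<subseteq> {1..p}" if "i < k" for i using FA(1) that by blast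
  have K2: "(x+c) mod m \<le> q \<and> 1 \<le> (x+c) div m \<and> (x+c) div m \<le> p"
    if xin: "x \<in> {1..N}" and nd: "\<not> Dr x" for x
  proof -
    define a where "a = x div m"
    define r where "r = x mod m"
    have xe: "x = a*m + r" unfolding a_def r_def by simp
    have rm: "r < m" unfolding r_def using mpos by simp
    have xN: "1 \<le> x" "x \<le> p*m + q" using xin N_def by auto
    have qm: "q < m" "c < m" using m_def by auto
    have am: "a*m + r \<le> p*m + q" using xe xN by simp
    have nd': "\<not> (r \<in> {1..q} \<and> (a = 0 \<or> h < r))" using nd by (simp add: Dr_def a_def r_def)
    consider "r = 0" | "q < r" | "1 \<le> r" "r \<le> h" "a \<ge> 1"
      using nd' by (cases "r = 0"; cases "q < r"; auto)
    then show ?thesis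
    proof cases
      case 1
      have e: "x + c = a*m + c" using xe 1 by simp
      have d: "(x+c) div m = a" unfolding e by (rule dm_div[OF qm(2)])
      have mo: "(x+c) mod m = c" unfolding e by (rule dm_mod[OF qm(2)])
      have "a \<noteq> 0" using xe 1 xN(1) by auto
      then have a1: "a \<ge> 1" by simp
      have "a*m < p*m + m" using am qm by linarith
      then have "a*m < (p+1)*m" by simp
      then have "a < p + 1" by (simp only: mult_less_cancel2)
      then have "a \<le> p" by simp
      then show ?thesis using d mo a1 hc by simp
    next
      case 2
      have e: "x + c = (a+1)*m + (r + c - m)" using xe 2 m_def by simp
      have cm: "r + c - m < m" using m_def rm by simp
      have d: "(x+c) div m = a + 1" unfolding e by (rule dm_div[OF cm])
      have mo: "(x+c) mod m = r + c - m" unfolding e by (rule dm_mod[OF cm])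
      have "a*m < p*m" using am 2 by linarith
      then have "a < p" by (simp only: mult_less_cancel2)
      moreover have "r + c - m \<le> q" using rm hc m_def by linarith
      ultimately show ?thesis using d mo by simp
    next
      case 3
      have e: "x + c = a*m + (r + c)" using xe by simp
      have cm: "r + c < m" using m_def 3 hc by linarith
      have d: "(x+c) div m = a" unfolding e by (rule dm_div[OF cm])
      have mo: "(x+c) mod m = r + c" unfolding e by (rule dm_mod[OF cm])
      have "a*m < p*m + m" using am qm by linarith
      then have "a*m < (p+1)*m" by simp
      then have "a < p + 1" by (simp only: mult_less_cancel2)
      then have "a \<le> p" by simp
      moreover have "r + c \<le> q" using 3 hc by linarith
      ultimately show ?thesis using d mo 3 by simp
    qed
  qed
  have Gn: "G i = {1..N} \<inter> {x. x mod m \<in> FB i \<and> (x div m = 0 \<or> h < x mod m)}" if "i < n" for i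
    using that unfolding G_def by simp
  have Gk: "G i = {1..N} \<inter> {x. \<not> Dr x} \<inter> {x. (x+c) mod m \<le> q \<and> (x+c) div m \<in> FA (i-n)}"
    if "\<not> i < n" for i
    using that unfolding G_def by simp
  have U: "(\<Union>i<n+k. G i) = {1..N}"
  proof
    show "(\<Union>i<n+k. G i) \<subseteq> {1..N}"
    proof
      fix x assume "x \<in> (\<Union>i<n+k. G i)"
      then obtain i where "x \<in> G i" by blast
      then show "x \<in> {1..N}" using Gn[of i] Gk[of i] by (cases "i < n") blast+
    qed
  next
    show "{1..N} \<subseteq> (\<Union>i<n+k. G i)"
    proof
      fix x assume x: "x \<in> {1..N}"
      show "x \<in> (\<Union>i<n+k. G i)"
      proof (cases "Dr x")
        case True
        then have "x mod m \<in> (\<Union>i<n. FB i)" using FB(1) Dr_def by auto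
        then obtain i where i: "i < n" "x mod m \<in> FB i" by blast
        then have "x \<in> G i" using x True unfolding Gn[OF i(1)] Dr_def by blast
        then show ?thesis using i by auto
      next
        case False
        then have "(x+c) div m \<in> (\<Union>i<k. FA i)" using FA(1) K2[OF x] by auto
        then obtain j where j: "j < k" "(x+c) div m \<in> FA j" by blast
        have "\<not> n + j < n" by simp
        then have "x \<in> G (n+j)" using x False K2[OF x] j unfolding Gk[OF \<open>\<not> n + j < n\<close>] by simp
        then show ?thesis using j by auto
      qed
    qed
  qed
  have DC: "G i \<inter> G j = {}" if "i < n" "\<not> j < n" for i j
  proof -
    have "x \<notin> G j" if "x \<in> G i" for x
    proof -
      have "x mod m \<in> FB i" "x div m = 0 \<or> h < x mod m" using that Gn[OF \<open>i < n\<close>] by auto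
      then have "Dr x" using FBsub[OF \<open>i < n\<close>] unfolding Dr_def by blast
      then show ?thesis using Gk[OF \<open>\<not> j < n\<close>] by blast
    qed
    then show ?thesis by blast
  qed
  have Disj: "\<forall>i<n+k. \<forall>j<n+k. i \<noteq> j \<longrightarrow> G i \<inter> G j = {}"
  proof (intro allI impI)
    fix i j assume ij: "i < n+k" "j < n+k" "i \<noteq> j"
    show "G i \<inter> G j = {}"
    proof (cases "i < n")
      case True
      note iT = True
      show ?thesis
      proof (cases "j < n")
        case True
        then have "FB i \<inter> FB j = {}" using FB(2) iT ij by blast
        then show ?thesis using Gn[OF iT] Gn[OF True] by blast
      next
        case False
        then show ?thesis using DC[OF iT False] by blast
      qed
    next
      case False
      note iF = False
      show ?thesis
      proof (cases "j < n")
        case True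
        then show ?thesis using DC[OF True iF] by blast
      next
        case False
        have "i - n < k" "j - n < k" "i - n \<noteq> j - n" using ij iF False by auto
        then have "FA (i-n) \<inter> FA (j-n) = {}" using FA(2) by blast
        then show ?thesis using Gk[OF iF] Gk[OF False] by blast
      qed
    qed
  qed
  have W: "\<forall>i<n+k. weakly_sum_free (G i)"
  proof (intro allI impI)
    fix i assume i: "i < n+k"
    show "weakly_sum_free (G i)"
    proof (cases "i < n")
      case True
      have "weakly_sum_free {x. x mod m \<in> FB i \<and> (x div m = 0 \<or> h < x mod m)}"
        by (rule D_wsf[where q=q and c=c]) (use FB(3) FBsub True m_def hc in auto)
      then show ?thesis by (rule wsf_subset) (unfold Gn[OF True], blast)
    next
      case False
      have "sum_free (FA (i-n))" using FA(3) False i by auto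
      then have "weakly_sum_free {x. (x+c) mod m \<le> q \<and> (x+c) div m \<in> FA (i-n)}"
        by (rule C_wsf) (use m_def hc in auto)
      then show ?thesis by (rule wsf_subset) (unfold Gk[OF False], blast)
    qed
  qed
  have NN: "{1..p * (q + c + 1) + q} = {1..N}" unfolding N_def m_def by (rule refl)
  have P: "partition_into weakly_sum_free {1..N} (n+k)"
    unfolding partition_into_def
    by (rule exI[of _ G], rule conjI[OF U conjI[OF Disj W]])
  show ?thesis using P unfolding ceq NN .
qed

end
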